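(* Let $N$ be a lattice of finite rank with basis $\{e_i\}_{i\in I}$, $F\subset I$, $\omega$ a $\mathbb{Q}$-valued skew-symmetric form on $N$ with $\omega(e_i,e_j)\in\mathbb{Z}$ whenever $i\notin F$ or $j\notin F$, $M=\mathrm{Hom}(N,\mathbb{Z})$, $\omega_1:N\to M_{\mathbb{Q}}$, $n\mapsto\omega(n,\cdot)$, and let $\Lambda$ be a $\mathbb{Q}$-valued skew-symmetric form on $M$ such that $\Lambda(\cdot,\omega_1(e_i))=d\,e_i$ (as elements of $N_{\mathbb{Q}}$) for all $i\in I\setminus F$, for a fixed $d\in\mathbb{Q}_{>0}$. Let $M^+$ be the set of nonzero elements of the $\mathbb{Z}_{\geq0}$-span of $\{\omega_1(e_i): i\in I\setminus F\}$, and for $m\in M^+$ let $|m|$ be the largest positive integer $k$ with $\frac1k m\in M^+$. Let $\Bbbk$ be a commutative ring containing $\mathbb{Z}$ and $\Bbbk_t=\Bbbk[t^{\pm1/D}]$ with $D$ a positive integer such that $\Lambda$ and $\omega$ are $\frac1D\mathbb{Z}$-valued. Then for any $a,b\in M^+$, $$\frac{(t^{d|a+b|}-t^{-d|a+b|})(t^{\Lambda(a,b)}-t^{-\Lambda(a,b)})}{(t^{d|a|}-t^{-d|a|})(t^{d|b|}-t^{-d|b|})}\in\Bbbk_t.$$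
   Context: All notation is introduced in the statement; the fraction is a priori an element of the fraction field of $\Bbbk_t$. *)

theory Defs
  imports Complex_Main "HOL-Computational_Algebra.Formal_Laurent_Series"
begin

text \<open>Lattice N = Z^I with basis e_i (I a finite index type 'i); M = Hom(N,Z) in dual
 coordinates. A skew form on N is given by its Gram matrix w i j = omega(e_i,e_j);
 a skew form on M by L j k = Lambda(e_j^*, e_k^*). omega_1(e_i) has dual coordinates
 (w i k)_k.\<close>

definition omega1 :: "('i \<Rightarrow> 'i \<Rightarrow> rat) \<Rightarrow> 'i \<Rightarrow> ('i \<Rightarrow> rat)" where
  "omega1 w i = (\<lambda>k. w i k)"

definition formM :: "('i::finite \<Rightarrow> 'i \<Rightarrow> rat) \<Rightarrow> ('i \<Rightarrow> rat) \<Rightarrow> ('i \<Rightarrow> rat) \<Rightarrow> rat" where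
  "formM L m m' = (\<Sum>j\<in>UNIV. \<Sum>k\<in>UNIV. m j * m' k * L j k)"

definition Mplus :: "('i::finite \<Rightarrow> 'i \<Rightarrow> rat) \<Rightarrow> 'i set \<Rightarrow> ('i \<Rightarrow> rat) set" where
  "Mplus w F = {m. m \<noteq> (\<lambda>_. 0) \<and> (\<exists>c :: 'i \<Rightarrow> nat.
      m = (\<lambda>k. \<Sum>i\<in>UNIV - F. of_nat (c i) * omega1 w i k))}"

definition absM :: "('i::finite \<Rightarrow> 'i \<Rightarrow> rat) \<Rightarrow> 'i set \<Rightarrow> ('i \<Rightarrow> rat) \<Rightarrow> nat" where
  "absM w F m = (GREATEST k::nat. 0 < k \<and> (\<lambda>j. m j / of_nat k) \<in> Mplus w F)"

text \<open>k_t = k[t^{\<plusminus>1/D}] realised as Laurent polynomials in s = t^{1/D}: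
 formal Laurent series with finitely many nonzero coefficients.\<close>
definition kt :: "'a::comm_ring_1 fls set" where
  "kt = {f. finite {n. fls_nth f n \<noteq> 0}}"

text \<open>t^x for x in (1/D)Z, i.e. s^(D x).\<close>
definition tpow :: "nat \<Rightarrow> rat \<Rightarrow> 'a::comm_ring_1 fls" where
  "tpow D x = fls_X_intpow \<lfloor>of_nat D * x\<rfloor>"

end

theory Submission imports Defs "HOL-Computational_Algebra.Polynomial_FPS" begin

definition Gs :: "'a::comm_ring_1 \<Rightarrow> nat \<Rightarrow> 'a" where
  "Gs x n = (\<Sum>i<n. x^i)"

lemma Gs_add: "Gs x (m+n) = Gs x m + x^m * Gs x n"
  by (induction n) (auto simp: Gs_def algebra_simps power_add)

lemma Gs_mult: "Gs x (k*n) = Gs x n * (\<Sum>j<k. x^(n*j))"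
proof (induction k)
  case 0 then show ?case by (simp add: Gs_def)
next
  case (Suc k)
  have "Gs x (Suc k * n) = Gs x (k*n) + x^(k*n) * Gs x n"
    by (metis Gs_add add.commute mult_Suc)
  then show ?case using Suc by (simp add: algebra_simps mult.commute)
qed

lemma pow_m1: "x^n - 1 = (x - 1) * Gs x n"
proof (induction n)
  case 0 then show ?case by (simp add: Gs_def)
next
  case (Suc n)
  have "Gs x (Suc n) = Gs x n + x^n" by (simp add: Gs_def)
  have "x^Suc n - 1 = (x-1)*x^n + (x^n - 1)" by (simp add: algebra_simps)
  also have "\<dots> = (x-1)*x^n + (x-1) * Gs x n" using Suc.IH by simp
  also have "\<dots> = (x-1)*(Gs x n + x^n)" by (simp add: algebra_simps)
  finally show ?case using \<open>Gs x (Suc n) = Gs x n + x^n\<close> by simp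
qed

lemma Gs_bezout: "\<exists>A B. A * Gs x m + B * Gs x n = Gs x (gcd m n)"
proof (induction m n rule: gcd_nat_induct)
  case (base m) show ?case by (rule exI[of _ 1], rule exI[of _ 0]) (simp add: Gs_def)
next
  case (step m n)
  from step(2) obtain A B where AB: "A * Gs x n + B * Gs x (m mod n) = Gs x (gcd n (m mod n))" by blast
  have m: "m = m mod n + (m div n) * n" by simp
  have "Gs x m = Gs x (m mod n) + x^(m mod n) * (Gs x n * (\<Sum>j<m div n. x^(n*j)))"
    by (subst m, subst Gs_add, subst Gs_mult) simp
  then have r: "Gs x (m mod n) = Gs x m - x^(m mod n) * (\<Sum>j<m div n. x^(n*j)) * Gs x n"
    by (simp add: algebra_simps)
  have "B * Gs x m + (A - B * x^(m mod n) * (\<Sum>j<m div n. x^(n*j))) * Gs x n = Gs x (gcd m n)"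
    using AB gcd_non_0_nat[of n m] step(1) unfolding r by (simp add: algebra_simps)
  then show ?case by blast
qed

lemma core:
  fixes x :: "'a::comm_ring_1"
  assumes "coprime p q"
  shows "(x^p - 1) * (x^q - 1) dvd (x - 1) * (x^(p*q) - 1)"
proof -
  obtain A B where AB: "A * Gs x p + B * Gs x q = 1"
    using Gs_bezout[of x p q] assms by (auto simp: Gs_def)
  have e1: "Gs x (p*q) = Gs x p * (\<Sum>j<q. x^(p*j))" using Gs_mult[of x q p] by (simp add: mult.commute)
  have e2: "Gs x (p*q) = Gs x q * (\<Sum>j<p. x^(q*j))" using Gs_mult[of x p q] by simp
  have "Gs x (p*q) = Gs x (p*q) * (A * Gs x p + B * Gs x q)" using AB by simp
  also have "\<dots> = A * Gs x p * Gs x (p*q) + B * Gs x q * Gs x (p*q)" by (simp add: algebra_simps)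
  also have "\<dots> = Gs x p * Gs x q * (A * (\<Sum>j<p. x^(q*j)) + B * (\<Sum>j<q. x^(p*j)))"
    by (subst (1) e2, subst e1) (simp add: algebra_simps)
  finally have "(x - 1) * (x^(p*q) - 1) = (x^p - 1) * (x^q - 1) * (A * (\<Sum>j<p. x^(q*j)) + B * (\<Sum>j<q. x^(p*j)))"
    by (simp add: pow_m1[of x] algebra_simps)
  then show ?thesis by (metis dvdI)
qed

lemma dvd_pow_m1:
  fixes x :: "'a::comm_ring_1"
  assumes "m dvd n" shows "x^m - 1 dvd x^n - 1"
proof -
  obtain k where "n = m*k" using assms by blast
  then have "x^n - 1 = (x^m)^k - 1" by (simp add: power_mult)
  also have "\<dots> = (x^m - 1) * Gs (x^m) k" by (rule pow_m1)
  finally show ?thesis by simp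
qed

lemma main_dvd:
  fixes x :: "'a::comm_ring_1"
  assumes "0 < ga" "0 < gb" "gcd ga gb dvd G" "ga * gb dvd n"
  shows "(x^ga - 1) * (x^gb - 1) dvd (x^G - 1) * (x^n - 1)"
proof -
  define g where "g = gcd ga gb"
  have gp: "g > 0" using assms by (simp add: g_def)
  obtain a' where a': "ga = g * a'" unfolding g_def by (meson gcd_dvd1 dvdE)
  obtain b' where b': "gb = g * b'" unfolding g_def by (meson gcd_dvd2 dvdE)
  have cop: "coprime a' b'"
    using a' b' gp g_def by (metis gcd_mult_distrib_nat mult.right_neutral nat_mult_eq_cancel1 coprime_iff_gcd_eq_1)
  define V where "V = x^g"
  have "(V^a' - 1) * (V^b' - 1) dvd (V - 1) * (V^(a'*b') - 1)" by (rule core[OF cop])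
  moreover have "V - 1 dvd x^G - 1" unfolding V_def using assms(3) g_def dvd_pow_m1 by blast
  moreover have "V^(a'*b') - 1 dvd x^n - 1" unfolding V_def power_mult[symmetric]
  proof (rule dvd_pow_m1)
    have "g * (a' * b') dvd ga * gb" using a' b' by (simp add: mult_dvd_mono)
    then show "g * (a' * b') dvd n" using assms(4) dvd_trans by blast
  qed
  ultimately have "(V^a' - 1) * (V^b' - 1) dvd (x^G - 1) * (x^n - 1)"
    by (meson dvd_trans mult_dvd_mono)
  then show ?thesis unfolding V_def power_mult[symmetric] a' b' .
qed


lemma lin_recover:
  fixes w L :: "'i::finite \<Rightarrow> 'i \<Rightarrow> rat" and r :: "'i \<Rightarrow> rat"
  assumes L_compat: "\<forall>i \<in> UNIV - F. \<forall>j. (\<Sum>k\<in>UNIV. L j k * omega1 w i k) = d * (if j = i then 1 else 0)"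
  shows "(\<Sum>k\<in>UNIV. L j k * (\<Sum>i\<in>UNIV-F. r i * omega1 w i k)) = d * (if j \<in> UNIV - F then r j else 0)"
proof -
  have "(\<Sum>k\<in>UNIV. L j k * (\<Sum>i\<in>UNIV-F. r i * omega1 w i k))
      = (\<Sum>i\<in>UNIV-F. r i * (\<Sum>k\<in>UNIV. L j k * omega1 w i k))"
    unfolding sum_distrib_left by (subst sum.swap) (simp add: algebra_simps)
  also have "\<dots> = (\<Sum>i\<in>UNIV-F. r i * (d * (if j = i then 1 else 0)))"
    using L_compat by simp
  also have "\<dots> = (\<Sum>i\<in>UNIV-F. (if j = i then r i * d else 0))"
    by (rule sum.cong) auto
  also have "\<dots> = d * (if j \<in> UNIV - F then r j else 0)"
    using sum.delta'[of "UNIV-F" j "\<lambda>i. r i * d"] by (simp add: mult.commute)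
  finally show ?thesis .
qed

lemma Mplus_rep:
  assumes "a \<in> Mplus w F"
  shows "\<exists>c::'i::finite\<Rightarrow>nat. a = (\<lambda>k. \<Sum>i\<in>UNIV - F. of_nat (c i) * omega1 w i k) \<and> (\<exists>i\<in>UNIV-F. c i \<noteq> 0)"
proof -
  from assms obtain c :: "'i \<Rightarrow> nat" where ne: "a \<noteq> (\<lambda>_. 0)"
    and c: "a = (\<lambda>k. \<Sum>i\<in>UNIV - F. of_nat (c i) * omega1 w i k)"
    unfolding Mplus_def by blast
  have "\<exists>i\<in>UNIV-F. c i \<noteq> 0"
  proof (rule ccontr)
    assume "\<not> ?thesis"
    then have "a = (\<lambda>_. 0)" unfolding c by (auto intro!: sum.neutral)
    with ne show False by simp
  qed
  with c show ?thesis by blast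
qed

lemma absM_eq:
  fixes w L :: "'i::finite \<Rightarrow> 'i \<Rightarrow> rat" and c :: "'i \<Rightarrow> nat"
  assumes L_compat: "\<forall>i \<in> UNIV - F. \<forall>j. (\<Sum>k\<in>UNIV. L j k * omega1 w i k) = d * (if j = i then 1 else 0)"
    and d_pos: "0 < d"
    and m: "m = (\<lambda>k. \<Sum>i\<in>UNIV - F. of_nat (c i) * omega1 w i k)"
    and nz: "\<exists>i\<in>UNIV-F. c i \<noteq> 0"
  shows "absM w F m = Gcd (c ` (UNIV - F))"
proof -
  let ?S = "UNIV - F"
  let ?G = "Gcd (c ` ?S)"
  have rec: "\<And>j. j \<in> ?S \<Longrightarrow> (\<Sum>k\<in>UNIV. L j k * m k) = d * of_nat (c j)"
    using lin_recover[OF L_compat, of _ "\<lambda>i. of_nat (c i)"] m by simp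
  have mnz: "m \<noteq> (\<lambda>_. 0)"
  proof
    assume "m = (\<lambda>_. 0)"
    then obtain i where "i \<in> ?S" "c i \<noteq> 0" "(\<Sum>k\<in>UNIV. L i k * m k) = 0" using nz by auto
    with rec[of i] d_pos show False by simp
  qed
  have iff: "(0 < k \<and> (\<lambda>j. m j / of_nat k) \<in> Mplus w F) \<longleftrightarrow> (0 < k \<and> k dvd ?G)" for k
  proof
    assume A: "0 < k \<and> (\<lambda>j. m j / of_nat k) \<in> Mplus w F"
    then obtain c' :: "'i \<Rightarrow> nat" where c': "(\<lambda>j. m j / of_nat k) = (\<lambda>k. \<Sum>i\<in>?S. of_nat (c' i) * omega1 w i k)"
      unfolding Mplus_def by blast
    have "k dvd c i" if i: "i \<in> ?S" for i
    proof -
      have c'j: "\<And>j. m j / of_nat k = (\<Sum>i\<in>?S. of_nat (c' i) * omega1 w i j)"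
        using c' by metis
      have "(\<Sum>j\<in>UNIV. L i j * (m j / of_nat k)) = d * of_nat (c' i)"
        unfolding c'j using lin_recover[OF L_compat, of i "\<lambda>i. of_nat (c' i)"] i by simp
      moreover have "(\<Sum>j\<in>UNIV. L i j * (m j / of_nat k)) = (\<Sum>j\<in>UNIV. L i j * m j) / of_nat k"
        by (simp add: sum_divide_distrib)
      ultimately have "d * of_nat (c i) / of_nat k = d * of_nat (c' i)" using rec[OF i] by simp
      then have "(of_nat (c i) :: rat) = of_nat (c' i) * of_nat k" using A d_pos
        by (simp add: field_simps)
      then have "c i = c' i * k" by (metis of_nat_eq_iff of_nat_mult)
      then show ?thesis by simp
    qed
    then show "0 < k \<and> k dvd ?G" using A by (auto intro: Gcd_greatest)
  next
    assume B: "0 < k \<and> k dvd ?G"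
    then have dv: "\<And>i. i \<in> ?S \<Longrightarrow> k dvd c i" by (meson Gcd_dvd dvd_trans imageI)
    define c' where "c' i = c i div k" for i
    have "(\<lambda>j. m j / of_nat k) = (\<lambda>j. \<Sum>i\<in>?S. of_nat (c' i) * omega1 w i j)"
    proof
      fix j
      have "m j / of_nat k = (\<Sum>i\<in>?S. of_nat (c i) * omega1 w i j / of_nat k)"
        by (simp add: m sum_divide_distrib)
      also have "\<dots> = (\<Sum>i\<in>?S. of_nat (c' i) * omega1 w i j)"
      proof (rule sum.cong[OF refl])
        fix i assume "i \<in> ?S"
        then have "c i = c' i * k" using dv unfolding c'_def by simp
        then show "of_nat (c i) * omega1 w i j / of_nat k = of_nat (c' i) * omega1 w i j"
          using B by simp
      qed
      finally show "m j / of_nat k = (\<Sum>i\<in>?S. of_nat (c' i) * omega1 w i j)" .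
    qed
    moreover have "(\<lambda>j. m j / of_nat k) \<noteq> (\<lambda>_. 0)"
    proof
      assume "(\<lambda>j. m j / of_nat k) = (\<lambda>_. 0)"
      then have "m = (\<lambda>_. 0)" using B by (auto simp: fun_eq_iff)
      with mnz show False by simp
    qed
    ultimately show "0 < k \<and> (\<lambda>j. m j / of_nat k) \<in> Mplus w F"
      using B unfolding Mplus_def by blast
  qed
  have Gpos: "0 < ?G"
  proof -
    have "?G \<noteq> 0" using nz Gcd_0_iff[of "c ` ?S"] by auto
    then show ?thesis by (simp only: neq0_conv)
  qed
  show ?thesis unfolding absM_def iff
  proof (rule Greatest_equality)
    show "0 < ?G \<and> ?G dvd ?G" using Gpos by simp
    show "\<And>y. 0 < y \<and> y dvd ?G \<Longrightarrow> y \<le> ?G" using Gpos by (auto intro: dvd_imp_le)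
  qed
qed


definition hh :: "'k::comm_ring_1 poly \<Rightarrow> 'k fls" where
  "hh p = fps_to_fls (fps_of_poly p)"

lemma hh_mult: "hh (p * q) = hh p * hh q"
  by (simp add: hh_def fps_of_poly_mult fls_times_fps_to_fls)
lemma hh_diff: "hh (p - q) = hh p - hh q"
  by (simp add: hh_def fps_of_poly_diff)
lemma hh_1: "hh 1 = 1"
  by (simp add: hh_def)
lemma hh_uminus: "hh (- p) = - hh p"
  by (simp add: hh_def fps_of_poly_uminus)
lemma hh_power: "hh (p ^ n) = hh p ^ n"
  by (simp add: hh_def fps_of_poly_power fps_to_fls_power)
lemma hh_monom: "hh (monom 1 n) = fls_X_intpow (int n)"
  by (simp add: hh_def fps_of_poly_monom' fps_to_fls_power fls_X_power_conv_shift_1)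

lemma kt_mem: "fls_X_intpow e * hh p \<in> kt"
proof -
  have "{n. fls_nth (fls_X_intpow e * hh p) n \<noteq> 0} \<subseteq> (\<lambda>k. k + e) ` {0..int (degree p)}"
  proof
    fix n assume "n \<in> {n. fls_nth (fls_X_intpow e * hh p) n \<noteq> 0}"
    then have nz: "fls_nth (hh p) (n - e) \<noteq> 0" by (simp add: fls_X_intpow_times_conv_shift)
    then have "0 \<le> n - e" "coeff p (nat (n - e)) \<noteq> 0" by (auto simp: hh_def split: if_splits)
    then have "nat (n - e) \<le> degree p" using le_degree by blast
    then have "n - e \<in> {0..int (degree p)}" using \<open>0 \<le> n - e\<close> by auto
    then show "n \<in> (\<lambda>k. k + e) ` {0..int (degree p)}" by (auto intro: image_eqI[of _ _ "n - e"])
  qed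
  then show ?thesis unfolding kt_def by (auto intro: finite_subset)
qed

lemma T_diff:
  "(fls_X_intpow (int u * int n) :: 'k::comm_ring_1 fls) - fls_X_intpow (- (int u * int n))
   = fls_X_intpow (- (int u * int n)) * hh ((monom 1 (2*u))^n - 1)"
proof -
  have e1: "hh ((monom (1::'k) (2*u))^n - 1) = fls_X_intpow (2 * (int u * int n)) - 1"
    by (simp add: hh_diff hh_power hh_monom hh_1 fls_X_intpow_power algebra_simps)
  have e2: "(fls_X_intpow (- (int u * int n)) :: 'k fls) * fls_X_intpow (2 * (int u * int n))
      = fls_X_intpow (int u * int n)"
    by (subst fls_X_intpow_times_fls_X_intpow) (simp add: mult.commute)
  show ?thesis unfolding e1 right_diff_distrib e2 by simp
qed

lemma Gcd_pos: "\<exists>i\<in>S. c i \<noteq> (0::nat) \<Longrightarrow> 0 < Gcd (c ` S)"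
proof -
  assume "\<exists>i\<in>S. c i \<noteq> 0"
  then have "Gcd (c ` S) \<noteq> 0" using Gcd_0_iff[of "c ` S"] by auto
  then show ?thesis by (simp only: neq0_conv)
qed

theorem lemma5p1:
  fixes w L :: "'i::finite \<Rightarrow> 'i \<Rightarrow> rat" and F :: "'i set" and d :: rat and D :: nat
    and a b :: "'i \<Rightarrow> rat"
  assumes w_skew: "\<forall>i j. w i j = - w j i"
    and w_int: "\<forall>i j. (i \<notin> F \<or> j \<notin> F) \<longrightarrow> w i j \<in> \<int>"
    and L_skew: "\<forall>i j. L i j = - L j i"
    and d_pos: "0 < d"
    and L_compat: "\<forall>i \<in> UNIV - F. \<forall>j. (\<Sum>k\<in>UNIV. L j k * omega1 w i k) = d * (if j = i then 1 else 0)"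
    and D_pos: "0 < D"
    and L_D: "\<forall>i j. of_nat D * L i j \<in> \<int>"
    and w_D: "\<forall>i j. of_nat D * w i j \<in> \<int>"
    and a_in: "a \<in> Mplus w F" and b_in: "b \<in> Mplus w F"
  shows "\<exists>q \<in> (kt :: 'k::{comm_ring_1, ring_char_0} fls set).
     q * ((tpow D (d * of_nat (absM w F a)) - tpow D (- d * of_nat (absM w F a)))
          * (tpow D (d * of_nat (absM w F b)) - tpow D (- d * of_nat (absM w F b))))
   = (tpow D (d * of_nat (absM w F (\<lambda>j. a j + b j))) - tpow D (- d * of_nat (absM w F (\<lambda>j. a j + b j))))
     * (tpow D (formM L a b) - tpow D (- formM L a b))"
proof -
  let ?S = "UNIV - F"
  obtain ca where ca: "a = (\<lambda>k. \<Sum>i\<in>?S. of_nat (ca i) * omega1 w i k)" and caz: "\<exists>i\<in>?S. ca i \<noteq> 0"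
    using Mplus_rep[OF a_in] by blast
  obtain cb where cb: "b = (\<lambda>k. \<Sum>i\<in>?S. of_nat (cb i) * omega1 w i k)" and cbz: "\<exists>i\<in>?S. cb i \<noteq> 0"
    using Mplus_rep[OF b_in] by blast
  define ga where "ga = Gcd (ca ` ?S)"
  define gb where "gb = Gcd (cb ` ?S)"
  define G where "G = Gcd ((\<lambda>i. ca i + cb i) ` ?S)"
  have ab: "(\<lambda>j. a j + b j) = (\<lambda>k. \<Sum>i\<in>?S. of_nat (ca i + cb i) * omega1 w i k)"
    unfolding ca cb by (rule ext) (simp add: sum.distrib[symmetric] distrib_right)
  have abz: "\<exists>i\<in>?S. ca i + cb i \<noteq> 0" using caz by auto
  have absa: "absM w F a = ga" using absM_eq[OF L_compat d_pos ca caz] ga_def by simp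
  have absb: "absM w F b = gb" using absM_eq[OF L_compat d_pos cb cbz] gb_def by simp
  have absab: "absM w F (\<lambda>j. a j + b j) = G" using absM_eq[OF L_compat d_pos ab abz] G_def by simp
  have gapos: "0 < ga" unfolding ga_def by (rule Gcd_pos[OF caz])
  have gbpos: "0 < gb" unfolding gb_def by (rule Gcd_pos[OF cbz])
  obtain i0 where i0: "i0 \<in> ?S" using caz by blast
  have dsum: "d = (\<Sum>k\<in>UNIV. L i0 k * omega1 w i0 k)" using L_compat i0 by simp
  have "of_nat D * d = (\<Sum>k\<in>UNIV. (of_nat D * L i0 k) * w i0 k)"
    unfolding dsum by (simp add: sum_distrib_left omega1_def algebra_simps)
  also have "\<dots> \<in> \<int>"
    by (rule Ints_sum, rule Ints_mult) (use L_D w_int i0 in auto)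
  finally obtain U :: int where U: "of_nat D * d = of_int U" by (metis Ints_cases)
  have "(0::rat) < of_int U" using U D_pos d_pos by (metis of_nat_0_less_iff mult_pos_pos)
  then have "0 < U" by simp
  define u where "u = nat U"
  have Uu: "U = int u" using \<open>0 < U\<close> u_def by simp
  have tp: "tpow D (d * of_nat m) = fls_X_intpow (int u * int m)" for m
  proof -
    have "of_nat D * (d * of_nat m) = (of_int (int u * int m) :: rat)" using U Uu
      by (simp add: mult.assoc[symmetric])
    then show ?thesis unfolding tpow_def by (simp only: floor_of_int)
  qed
  have tm: "tpow D (- d * of_nat m) = fls_X_intpow (- (int u * int m))" for m
  proof -
    have "of_nat D * (- d * of_nat m) = (of_int (- (int u * int m)) :: rat)" using U Uu
      by (simp add: mult.assoc[symmetric])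
    then show ?thesis unfolding tpow_def by (simp only: floor_of_int)
  qed
  define l where "l = (\<Sum>j\<in>?S. \<Sum>i\<in>?S. int (ca i) * int (cb j) * \<lfloor>w i j\<rfloor>)"
  have s1: "(\<Sum>k\<in>UNIV. L j k * b k) = d * (if j \<in> ?S then of_nat (cb j) else 0)" for j
    using lin_recover[OF L_compat, of j "\<lambda>i. of_nat (cb i)"] cb by simp
  have "formM L a b = (\<Sum>j\<in>UNIV. a j * (\<Sum>k\<in>UNIV. L j k * b k))"
    unfolding formM_def by (simp add: sum_distrib_left algebra_simps)
  also have "\<dots> = (\<Sum>j\<in>UNIV. if j \<in> ?S then d * (a j * of_nat (cb j)) else 0)"
    using s1 by (intro sum.cong) auto
  also have "\<dots> = (\<Sum>j\<in>UNIV \<inter> ?S. d * (a j * of_nat (cb j)))"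
    by (rule sum.inter_restrict[symmetric]) simp
  also have "\<dots> = d * (\<Sum>j\<in>?S. a j * of_nat (cb j))" by (simp add: sum_distrib_left)
  also have "(\<Sum>j\<in>?S. a j * of_nat (cb j)) = of_int l"
  proof -
    have "(\<Sum>j\<in>?S. a j * of_nat (cb j)) = (\<Sum>j\<in>?S. \<Sum>i\<in>?S. of_nat (ca i) * of_nat (cb j) * w i j)"
      unfolding ca by (simp add: sum_distrib_left sum_distrib_right omega1_def mult_ac)
    also have "\<dots> = (\<Sum>j\<in>?S. \<Sum>i\<in>?S. of_int (int (ca i) * int (cb j) * \<lfloor>w i j\<rfloor>))"
    proof (intro sum.cong refl)
      fix j i assume "i \<in> ?S"
      then have "w i j \<in> \<int>" using w_int by simp
      then obtain z where "w i j = of_int z" by (metis Ints_cases)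
      then have "of_int \<lfloor>w i j\<rfloor> = w i j" by simp
      then show "of_nat (ca i) * of_nat (cb j) * w i j = (of_int (int (ca i) * int (cb j) * \<lfloor>w i j\<rfloor>) :: rat)"
        by (simp only: of_int_mult of_int_of_nat_eq \<open>of_int \<lfloor>w i j\<rfloor> = w i j\<close>)
    qed
    also have "\<dots> = of_int l" unfolding l_def by simp
    finally show ?thesis .
  qed
  finally have fL: "formM L a b = d * of_int l" .
  have dvd_l: "int ga * int gb dvd l"
    unfolding l_def
  proof (intro dvd_sum)
    fix j i assume j: "j \<in> ?S" and i: "i \<in> ?S"
    have "ga dvd ca i" unfolding ga_def using i by simp
    moreover have "gb dvd cb j" unfolding gb_def using j by simp
    ultimately have "int ga * int gb dvd int (ca i) * int (cb j)" by (simp add: mult_dvd_mono)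
    then show "int ga * int gb dvd int (ca i) * int (cb j) * \<lfloor>w i j\<rfloor>" by (rule dvd_mult2)
  qed
  define n where "n = nat \<bar>l\<bar>"
  have "int (ga * gb) dvd int n" using dvd_l unfolding n_def by simp
  then have gn: "ga * gb dvd n" by (simp only: int_dvd_int_iff)
  have gG: "gcd ga gb dvd G" unfolding G_def
  proof (rule Gcd_greatest)
    fix x assume "x \<in> (\<lambda>i. ca i + cb i) ` ?S"
    then obtain i where i: "i \<in> ?S" and x: "x = ca i + cb i" by blast
    have "gcd ga gb dvd ca i" using i unfolding ga_def by (meson Gcd_dvd dvd_trans gcd_dvd1 imageI)
    moreover have "gcd ga gb dvd cb i" using i unfolding gb_def by (meson Gcd_dvd dvd_trans gcd_dvd2 imageI)
    ultimately show "gcd ga gb dvd x" unfolding x by simp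
  qed
  define P where "P = (monom (1::'k) (2*u))"
  obtain c where c: "(P^G - 1) * (P^n - 1) = (P^ga - 1) * (P^gb - 1) * c"
    using main_dvd[OF gapos gbpos gG gn, of P] by (auto elim!: dvdE)
  define \<sigma> where "\<sigma> = (if l \<ge> 0 then 1 else - 1 :: 'k poly)"
  have lam: "tpow D (formM L a b) - tpow D (- formM L a b)
     = hh \<sigma> * (fls_X_intpow (- (int u * int n)) * hh (P^n - 1))"
  proof (cases "l \<ge> 0")
    case True
    then have "l = int n" unfolding n_def by simp
    then have fm: "formM L a b = d * of_nat n" "- formM L a b = - d * of_nat n" using fL by simp_all
    show ?thesis unfolding fm(2) unfolding fm(1) tp tm using True T_diff[of u n] by (simp add: \<sigma>_def hh_1 P_def)
  next
    case False
    then have "l = - int n" unfolding n_def by simp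
    then have fm: "formM L a b = - d * of_nat n" "- formM L a b = d * of_nat n" using fL by simp_all
    have td: "fls_X_intpow (int u * int n) - fls_X_intpow (- (int u * int n))
       = (fls_X_intpow (- (int u * int n)) :: 'k fls) * hh (P^n - 1)" unfolding P_def by (rule T_diff)
    have "(fls_X_intpow (- (int u * int n)) :: 'k fls) - fls_X_intpow (int u * int n)
        = - (fls_X_intpow (int u * int n) - fls_X_intpow (- (int u * int n)))" by (rule minus_diff_eq[symmetric])
    also have "\<dots> = - (fls_X_intpow (- (int u * int n)) * hh (P^n - 1))" by (simp only: td)
    also have "\<dots> = hh \<sigma> * (fls_X_intpow (- (int u * int n)) * hh (P^n - 1))"
      using False by (simp add: \<sigma>_def hh_uminus hh_1)
    finally show ?thesis unfolding fm(2) unfolding fm(1) tp tm .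
  qed
  define e where "e = int u * int ga + int u * int gb - int u * int G - int u * int n"
  define q where "q = (fls_X_intpow e :: 'k fls) * hh (\<sigma> * c)"
  have qkt: "q \<in> kt" unfolding q_def by (rule kt_mem)
  let ?Ta = "fls_X_intpow (- (int u * int ga)) :: 'k fls"
  let ?Tb = "fls_X_intpow (- (int u * int gb)) :: 'k fls"
  let ?TG = "fls_X_intpow (- (int u * int G)) :: 'k fls"
  let ?Tn = "fls_X_intpow (- (int u * int n)) :: 'k fls"
  have Tpart: "fls_X_intpow e * ?Ta * ?Tb = ?TG * ?Tn"
    by (simp add: fls_times_both_shifted_simp e_def algebra_simps)
  have hpart: "hh (\<sigma> * c) * hh (P^ga - 1) * hh (P^gb - 1) = hh \<sigma> * hh (P^G - 1) * hh (P^n - 1)"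
  proof -
    have "\<sigma> * c * (P^ga - 1) * (P^gb - 1) = \<sigma> * ((P^G - 1) * (P^n - 1))"
      unfolding c by (simp add: algebra_simps)
    then show ?thesis by (simp only: hh_mult[symmetric] mult.assoc)
  qed
  have "q * ((?Ta * hh (P^ga - 1)) * (?Tb * hh (P^gb - 1)))
      = (fls_X_intpow e * ?Ta * ?Tb) * (hh (\<sigma> * c) * hh (P^ga - 1) * hh (P^gb - 1))"
    unfolding q_def by (simp add: mult_ac)
  also have "\<dots> = (?TG * hh (P^G - 1)) * (hh \<sigma> * (?Tn * hh (P^n - 1)))"
    unfolding Tpart hpart by (simp add: mult_ac)
  finally have eq: "q * ((?Ta * hh (P^ga - 1)) * (?Tb * hh (P^gb - 1)))
      = (?TG * hh (P^G - 1)) * (hh \<sigma> * (?Tn * hh (P^n - 1)))" .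
  show ?thesis
    apply (rule bexI[OF _ qkt])
    unfolding absa absb absab tp tm lam T_diff P_def[symmetric] by (rule eq)
qed

end
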